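(* Let $L\in\mathbb N$, ${\bf A}\in\mathbb R^{M\times N}$, ${\bf b}\in\mathbb R^M$, and let ${\bf x}$ follow the gradient flow $\partial_t{\bf x}=-\nabla\mathcal L({\bf x})$, ${\bf x}(0)={\bf x}_0$, with ${\bf x}_0>0$ (entrywise) and ${\bf x}(t)>0$ for all $t\ge 0$ (when $L\neq 2$ and $2-L<0$; for $L=2$ positivity is needed for the logarithm). Then the quantity $$h_0(t):=(I-{\bf A}^\dagger{\bf A})\cdot\begin{cases}\log({\bf x}(t)) & L=2,\\ {\bf x}(t)^{\odot(2-L)} & L\neq2\end{cases}$$ is the same for all $t\ge0$.
   Context: $\odot$ denotes entrywise product/power, $\log$ acts entrywise, vector inequalities are entrywise; ${\bf A}^\dagger$ is the Moore–Penrose pseudoinverse. Loss: $\mathcal L({\bf x})=\frac{1}{2L}\|{\bf A}{\bf x}^{\odot L}-{\bf b}\|_2^2$, with $\nabla\mathcal L({\bf x})=[{\bf A}^\top({\bf A}{\bf x}^{\odot L}-{\bf b})]\odot{\bf x}^{\odot(L-1)}$. *)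

theory Defs
  imports "HOL-Analysis.Analysis"
begin

definition pinv :: "real^'n^'m \<Rightarrow> real^'m^'n" where
  "pinv A = (THE B. A ** B ** A = A \<and> B ** A ** B = B \<and>
                    transpose (A ** B) = A ** B \<and> transpose (B ** A) = B ** A)"

definition epow :: "real^'n \<Rightarrow> nat \<Rightarrow> real^'n" where
  "epow x k = (\<chi> i. (x $ i) ^ k)"

text \<open>Gradient of L(x) = 1/(2L) |A x^L - b|^2, as given in the paper.\<close>
definition gradL :: "real^'n^'m \<Rightarrow> real^'m \<Rightarrow> nat \<Rightarrow> real^'n \<Rightarrow> real^'n" where
  "gradL A b L x = (\<chi> i. (transpose A *v (A *v epow x L - b)) $ i * (x $ i) ^ (L - 1))"

definition h0 :: "real^'n^'m \<Rightarrow> nat \<Rightarrow> real^'n \<Rightarrow> real^'n" where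
  "h0 A L x = (mat 1 - pinv A ** A) *v
     (if L = 2 then (\<chi> i. ln (x $ i)) else (\<chi> i. (x $ i) powr (2 - real L)))"

end

theory Submission
  imports Defs
begin
definition proj :: "'a::euclidean_space set \<Rightarrow> 'a \<Rightarrow> 'a" where
  "proj S x = (SOME y. y \<in> S \<and> (\<forall>w\<in>S. orthogonal (x - y) w))"

lemma proj_prop:
  assumes "subspace S"
  shows "proj S x \<in> S \<and> (\<forall>w\<in>S. orthogonal (x - proj S x) w)"
proof -
  obtain y z where "y \<in> span S" "\<And>w. w \<in> span S \<Longrightarrow> orthogonal z w" "x = y + z"
    using orthogonal_subspace_decomp_exists[of S x] by blast
  then have "\<exists>y. y \<in> S \<and> (\<forall>w\<in>S. orthogonal (x - y) w)"
    using assms by (metis add_diff_cancel_left' span_eq_iff)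
  then show ?thesis unfolding proj_def by (rule someI_ex)
qed

lemma proj_unique:
  assumes S: "subspace S" and y: "y \<in> S" and o: "\<forall>w\<in>S. orthogonal (x - y) w"
  shows "proj S x = y"
proof -
  let ?p = "proj S x"
  have p: "?p \<in> S" "\<forall>w\<in>S. orthogonal (x - ?p) w" using proj_prop[OF S] by auto
  have d: "?p - y \<in> S" using p y S by (simp add: subspace_diff)
  have "(x - y) \<bullet> (?p - y) = 0" "(x - ?p) \<bullet> (?p - y) = 0"
    using o p d by (auto simp: orthogonal_def)
  then have "(?p - y) \<bullet> (?p - y) = 0"
    by (metis (no_types, lifting) diff_diff_eq2 diff_self inner_diff_left eq_iff_diff_eq_0 add.commute diff_add_cancel)
  then show ?thesis by simp
qed

lemma proj_id: "subspace S \<Longrightarrow> x \<in> S \<Longrightarrow> proj S x = x"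
  by (rule proj_unique) (auto simp: orthogonal_def)

lemma proj_linear:
  assumes S: "subspace S"
  shows "linear (proj S)"
proof (rule linearI)
  fix x y
  show "proj S (x + y) = proj S x + proj S y"
    apply (rule proj_unique[OF S])
    using proj_prop[OF S, of x] proj_prop[OF S, of y] S
    by (auto simp: subspace_add orthogonal_def inner_diff_left inner_add_left algebra_simps)
next
  fix c :: real and x
  show "proj S (c *\<^sub>R x) = c *\<^sub>R proj S x"
    apply (rule proj_unique[OF S])
    using proj_prop[OF S, of x] S
    by (auto simp: subspace_scale orthogonal_def inner_diff_left algebra_simps)
qed

lemma proj_selfadj:
  assumes S: "subspace S"
  shows "proj S x \<bullet> y = x \<bullet> proj S y"
proof -
  have a: "proj S x \<bullet> (y - proj S y) = 0" "(x - proj S x) \<bullet> proj S y = 0"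
    using proj_prop[OF S, of x] proj_prop[OF S, of y]
    by (auto simp: orthogonal_def inner_commute)
  then show ?thesis by (simp add: inner_diff_left inner_diff_right)
qed

lemma tmv_inner: "(transpose A *v w) \<bullet> d = w \<bullet> ((A::real^'n^'m) *v d)"
  by (simp add: dot_lmul_matrix)

lemma sym_matrix:
  fixes M :: "real^'n^'n"
  assumes "\<And>x y. (M *v x) \<bullet> y = x \<bullet> (M *v y)"
  shows "transpose M = M"
proof -
  have "transpose M *v x = M *v x" for x
  proof -
    have "(transpose M *v x - M *v x) \<bullet> y = 0" for y
      using assms[of x y] tmv_inner[of M x y] by (simp add: inner_diff_left)
    from this[of "transpose M *v x - M *v x"] show ?thesis by simp
  qed
  then show ?thesis by (simp add: matrix_eq)
qed

definition penrose :: "real^'n^'m \<Rightarrow> real^'m^'n \<Rightarrow> bool" where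
  "penrose A B \<longleftrightarrow> A ** B ** A = A \<and> B ** A ** B = B \<and>
                    transpose (A ** B) = A ** B \<and> transpose (B ** A) = B ** A"

lemma penrose_exists:
  fixes A :: "real^'n^'m"
  shows "\<exists>B. penrose A B"
proof -
  define V where "V = range (\<lambda>w. transpose A *v w)"
  define W where "W = range (\<lambda>u. A *v u)"
  have sV: "subspace V" unfolding V_def
    by (rule real_vector.linear_subspace_image[OF matrix_vector_mul_linear subspace_UNIV])
  have sW: "subspace W" unfolding W_def
    by (rule real_vector.linear_subspace_image[OF matrix_vector_mul_linear subspace_UNIV])
  have kerV: "A *v (u - proj V u) = 0" for u
  proof -
    let ?d = "u - proj V u"
    have "?d \<bullet> (transpose A *v w) = 0" for w
      using proj_prop[OF sV, of u] by (auto simp: orthogonal_def V_def)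
    then have "(A *v ?d) \<bullet> w = 0" for w
      by (metis inner_commute tmv_inner)
    from this[of "A *v ?d"] show ?thesis by simp
  qed
  have Apv: "A *v proj V u = A *v u" for u
    using kerV[of u] by (simp add: matrix_vector_mult_diff_distrib)
  have injV: "v = 0" if "v \<in> V" "A *v v = 0" for v
  proof -
    obtain w where "v = transpose A *v w" using \<open>v \<in> V\<close> V_def by auto
    then have "v \<bullet> v = w \<bullet> (A *v v)" using tmv_inner by metis
    then show ?thesis using \<open>A *v v = 0\<close> by simp
  qed
  define Bf where "Bf y = (SOME v. v \<in> V \<and> A *v v = proj W y)" for y
  have Bf: "Bf y \<in> V \<and> A *v Bf y = proj W y" for y
  proof -
    obtain u where "proj W y = A *v u" using proj_prop[OF sW, of y] W_def by auto
    then have "proj V u \<in> V \<and> A *v proj V u = proj W y"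
      using proj_prop[OF sV, of u] Apv by auto
    then show ?thesis unfolding Bf_def by (rule someI)
  qed
  have Bfu: "Bf y = v" if "v \<in> V" "A *v v = proj W y" for v y
  proof -
    have "v - Bf y \<in> V" using Bf[of y] that sV by (simp add: subspace_diff)
    moreover have "A *v (v - Bf y) = 0" using Bf[of y] that
      by (simp add: matrix_vector_mult_diff_distrib)
    ultimately show ?thesis using injV by fastforce
  qed
  have linB: "linear Bf"
  proof (rule linearI)
    fix x y
    show "Bf (x + y) = Bf x + Bf y"
      apply (rule Bfu)
      using Bf[of x] Bf[of y] sV linear_add[OF proj_linear[OF sW]]
      by (auto simp: subspace_add matrix_vector_right_distrib)
  next
    fix c :: real and x
    show "Bf (c *\<^sub>R x) = c *\<^sub>R Bf x"
      apply (rule Bfu)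
      using Bf[of x] sV linear_scale[OF proj_linear[OF sW]]
      by (auto simp: subspace_scale matrix_vector_mult_scaleR)
  qed
  define B where "B = matrix Bf"
  have Bv: "B *v y = Bf y" for y unfolding B_def using linB
    by (simp add: matrix_works)
  have AW: "A *v x \<in> W" for x unfolding W_def by auto
  have c1: "A ** B ** A = A"
    by (simp add: matrix_eq Bv Bf proj_id[OF sW AW] flip: matrix_vector_mul_assoc)
  have c2: "B ** A ** B = B"
  proof -
    have "Bf (A *v Bf y) = Bf y" for y
      by (rule Bfu) (use Bf[of y] proj_id[OF sW AW, of "Bf y"] in auto)
    then show ?thesis
      by (simp add: matrix_eq Bv flip: matrix_vector_mul_assoc)
  qed
  have c3: "transpose (A ** B) = A ** B"
    by (rule sym_matrix)
       (simp add: Bv Bf proj_selfadj[OF sW] flip: matrix_vector_mul_assoc)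
  have BA: "Bf (A *v x) = proj V x" for x
    by (rule Bfu) (use proj_prop[OF sV, of x] Apv proj_id[OF sW AW] in auto)
  have c4: "transpose (B ** A) = B ** A"
    by (rule sym_matrix)
       (simp add: Bv BA proj_selfadj[OF sV] flip: matrix_vector_mul_assoc)
  show ?thesis using c1 c2 c3 c4 unfolding penrose_def by blast
qed

lemma penrose_unique:
  fixes A :: "real^'n^'m"
  assumes B: "penrose A B" and C: "penrose A C"
  shows "B = C"
proof -
  have b1: "A ** B ** A = A" and b2: "B ** A ** B = B" and b3: "transpose (A ** B) = A ** B"
    and b4: "transpose (B ** A) = B ** A" using B unfolding penrose_def by auto
  have c1: "A ** C ** A = A" and c2: "C ** A ** C = C" and c3: "transpose (A ** C) = A ** C"
    and c4: "transpose (C ** A) = C ** A" using C unfolding penrose_def by auto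
  have At1: "transpose A = transpose A ** (A ** C)"
  proof -
    have "transpose A = transpose (A ** C ** A)" using c1 by simp
    also have "\<dots> = transpose A ** transpose (A ** C)" by (simp add: matrix_transpose_mul)
    finally show ?thesis using c3 by simp
  qed
  have At2: "transpose A = B ** A ** transpose A"
  proof -
    have "transpose A = transpose (A ** (B ** A))" using b1 by (simp add: matrix_mul_assoc)
    also have "\<dots> = transpose (B ** A) ** transpose A" by (simp add: matrix_transpose_mul)
    finally show ?thesis using b4 by simp
  qed
  have "B = B ** (A ** B)" using b2 by (simp add: matrix_mul_assoc)
  also have "\<dots> = B ** transpose (A ** B)" using b3 by simp
  also have "\<dots> = B ** transpose B ** transpose A" by (simp add: matrix_transpose_mul matrix_mul_assoc)
  also have "\<dots> = B ** transpose B ** (transpose A ** (A ** C))" using At1 by simp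
  also have "\<dots> = B ** transpose (A ** B) ** A ** C" by (simp add: matrix_transpose_mul matrix_mul_assoc)
  also have "\<dots> = B ** A ** C" using b3 b2 by (simp add: matrix_mul_assoc)
  finally have 1: "B = B ** A ** C" .
  have "C = (C ** A) ** C" using c2 by simp
  also have "\<dots> = transpose (C ** A) ** C" using c4 by simp
  also have "\<dots> = transpose A ** transpose C ** C" by (simp add: matrix_transpose_mul)
  also have "\<dots> = B ** A ** transpose A ** transpose C ** C" using At2 by simp
  also have "\<dots> = B ** A ** transpose (C ** A) ** C" by (simp add: matrix_transpose_mul matrix_mul_assoc)
  also have "\<dots> = B ** A ** C" using c4 c2 by (metis matrix_mul_assoc)
  finally show ?thesis using 1 by simp
qed

lemma pinv_penrose: "penrose A (pinv A)"
proof -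
  obtain B where B: "penrose A B" using penrose_exists by blast
  have "penrose A (THE B. penrose A B)"
    by (rule theI[of "penrose A" B]) (use B penrose_unique in auto)
  then show ?thesis unfolding pinv_def penrose_def by simp
qed

lemma pinv_kill: "(mat 1 - pinv A ** A) *v (transpose A *v r) = 0"
proof -
  have b1: "A ** pinv A ** A = A" and b4: "transpose (pinv A ** A) = pinv A ** A"
    using pinv_penrose[of A] unfolding penrose_def by auto
  have "transpose A = transpose (A ** (pinv A ** A))" using b1 by (simp add: matrix_mul_assoc)
  also have "\<dots> = pinv A ** A ** transpose A" using b4 by (simp add: matrix_transpose_mul)
  finally have "transpose A = pinv A ** A ** transpose A" .
  then have "pinv A ** A *v (transpose A *v r) = transpose A *v r"
    by (metis matrix_vector_mul_assoc)
  then show ?thesis by (simp add: matrix_vector_mult_diff_rdistrib)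
qed

theorem mainTheorem9:
  fixes A :: "real^'n^'m" and b :: "real^'m" and L :: nat
    and x :: "real \<Rightarrow> real^'n" and x0 :: "real^'n"
  assumes L_pos: "L \<ge> 1"
    and flow: "\<And>t. t \<ge> 0 \<Longrightarrow>
                 (x has_vector_derivative (- gradL A b L (x t))) (at t within {0..})"
    and init: "x 0 = x0"
    and x0_pos: "\<And>i. x0 $ i > 0"
    and x_pos: "\<And>t i. t \<ge> 0 \<Longrightarrow> x t $ i > 0"
  shows "\<forall>t\<ge>0. h0 A L (x t) = h0 A L (x 0)"
proof -
  define Q where "Q = mat 1 - pinv A ** A"
  define g where "g t = transpose A *v (A *v epow (x t) L - b)" for t
  define F where "F t = (if L = 2 then (\<chi> i. ln (x t $ i)) else (\<chi> i. (x t $ i) powr (2 - real L)))" for t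
  define c where "c = (if L = 2 then 1 else 2 - real L)"
  have h0F: "h0 A L (x t) = Q *v F t" for t unfolding h0_def Q_def F_def by simp
  have dx: "((\<lambda>s. x s $ j) has_field_derivative (- (g t $ j * x t $ j ^ (L-1)))) (at t within {0..})"
    if "t \<ge> 0" for t j
  proof -
    have "(x has_derivative (\<lambda>h. h *\<^sub>R (- gradL A b L (x t)))) (at t within {0..})"
      using flow[OF that] by (simp add: has_vector_derivative_def)
    from bounded_linear.has_derivative[OF bounded_linear_vec_nth[of j] this]
    have "((\<lambda>s. x s $ j) has_derivative (\<lambda>h. h * (- gradL A b L (x t)) $ j)) (at t within {0..})"
      by simp
    moreover have "(\<lambda>h. h * (- gradL A b L (x t)) $ j) = (*) (- (g t $ j * x t $ j ^ (L-1)))"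
      by (auto simp: gradL_def g_def)
    ultimately show ?thesis by (simp add: has_field_derivative_def)
  qed
  have dF: "((\<lambda>s. F s $ j) has_field_derivative (- c * g t $ j)) (at t within {0..})"
    if t: "t \<ge> 0" for t j
  proof (cases "L = 2")
    case True
    have pos: "x t $ j > 0" using x_pos[OF t] .
    have "((\<lambda>s. ln (x s $ j)) has_field_derivative (1 / x t $ j * (- (g t $ j * x t $ j ^ (L-1))))) (at t within {0..})"
      using DERIV_chain2[OF DERIV_ln[OF pos] dx[OF t]] by (simp add: divide_inverse)
    moreover have "1 / x t $ j * (- (g t $ j * x t $ j ^ (L-1))) = - c * g t $ j"
      using pos True by (simp add: c_def field_simps)
    ultimately show ?thesis using True by (simp add: F_def)
  next
    case False
    have pos: "x t $ j > 0" using x_pos[OF t] .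
    have d1: "((\<lambda>s. (x s $ j) powr (2 - real L)) has_field_derivative
        ((2 - real L) * (x t $ j) powr (2 - real L - 1) * (- (g t $ j * x t $ j ^ (L-1))))) (at t within {0..})"
      using DERIV_chain2[OF has_real_derivative_powr[OF pos, of "2 - real L"] dx[OF t]] by simp
    have e1: "(x t $ j) powr (2 - real L - 1) * x t $ j ^ (L-1) = 1"
    proof -
      have "x t $ j ^ (L-1) = (x t $ j) powr (real L - 1)"
        using pos L_pos powr_realpow[OF pos, of "L - 1"] by (simp add: of_nat_diff)
      then show ?thesis using pos by (simp add: powr_add[symmetric])
    qed
    have e2: "(2 - real L) * (x t $ j) powr (2 - real L - 1) * (- (g t $ j * x t $ j ^ (L-1)))
        = - c * g t $ j * ((x t $ j) powr (2 - real L - 1) * x t $ j ^ (L-1))"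
      using False by (simp add: c_def algebra_simps)
    have eq: "(2 - real L) * (x t $ j) powr (2 - real L - 1) * (- (g t $ j * x t $ j ^ (L-1))) = - c * g t $ j"
      using e2 by (simp only: e1 mult_1_right)
    have Feq: "(\<lambda>s. F s $ j) = (\<lambda>s. (x s $ j) powr (2 - real L))"
      using False by (simp add: F_def)
    show ?thesis using d1 unfolding eq Feq .
  qed
  have dQ: "((\<lambda>s. (Q *v F s) $ i) has_field_derivative 0) (at t within {0..})"
    if t: "t \<ge> 0" for t i
  proof -
    have "((\<lambda>s. \<Sum>j\<in>UNIV. Q $ i $ j * F s $ j) has_field_derivative
           (\<Sum>j\<in>UNIV. Q $ i $ j * (- c * g t $ j))) (at t within {0..})"
      by (intro DERIV_sum DERIV_cmult dF[OF t])
    moreover have "(\<Sum>j\<in>UNIV. Q $ i $ j * (- c * g t $ j)) = - c * (Q *v g t) $ i"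
      by (simp add: matrix_vector_mult_def sum_distrib_left algebra_simps)
    moreover have "(Q *v g t) $ i = 0" unfolding Q_def g_def pinv_kill by simp
    ultimately show ?thesis by (simp add: matrix_vector_mult_def)
  qed
  have ex: "\<exists>k. \<forall>s\<in>{0..}. (Q *v F s) $ i = k" for i
    by (rule has_field_derivative_zero_constant) (auto intro: dQ)
  have comp: "(Q *v F t) $ i = (Q *v F 0) $ i" if "t \<ge> 0" for t i
    using ex[of i] that by (metis atLeast_iff order_refl)
  show ?thesis
  proof (intro allI impI)
    fix t :: real assume "t \<ge> 0"
    then show "h0 A L (x t) = h0 A L (x 0)"
      unfolding h0F by (subst vec_eq_iff) (blast intro: comp)
  qed
qed

end
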